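(* Let $F$ be a finite family of seeds, $i\ge1$, $m\ge1$ and $0\le k\le im$ integers. If the $i$-regular expansion $i\otimes F$ solves the $(im,k)$-problem, then $F$ solves the $(im,k)$-problem and $F$ solves the $(m,\lfloor k/i\rfloor)$-problem.
   Context: A seed is a finite set $Q=\{p_1<\dots<p_d\}$ of nonnegative integers with $p_1=0$; its span is $p_d+1$. An $(m,k)$-similarity is a binary word of length $m$ with exactly $k$ zeros. $Q$ matches a binary word $w$ at position $j$ ($1\le j\le |w|-p_d$) if $w[j+p_t]=1$ for all $t$; $Q$ detects $w$ if it matches at some position. A family $F$ solves the $(m,k)$-problem if every $(m,k)$-similarity is detected by at least one seed of $F$. The $i$-regular expansion is $i\otimes Q=\{ip_1,\dots,ip_d\}$ and $i\otimes F=\{i\otimes Q:Q\in F\}$. *)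

theory Defs
  imports Main
begin

text \<open>A seed is a finite set of naturals containing 0 (its least element is 0).
  Binary words are bool lists (True = 1, False = 0), indexed from 0.\<close>

definition is_seed :: "nat set \<Rightarrow> bool" where
  "is_seed Q \<longleftrightarrow> finite Q \<and> Q \<noteq> {} \<and> 0 \<in> Q"

definition span :: "nat set \<Rightarrow> nat" where
  "span Q = Max Q + 1"

definition similarity :: "nat \<Rightarrow> nat \<Rightarrow> bool list \<Rightarrow> bool" where
  "similarity m k w \<longleftrightarrow> length w = m \<and> length (filter Not w) = k"

definition matches_at :: "nat set \<Rightarrow> bool list \<Rightarrow> nat \<Rightarrow> bool" where
  "matches_at Q w j \<longleftrightarrow> j + Max Q < length w \<and> (\<forall>p\<in>Q. w ! (j + p))"

definition detects :: "nat set \<Rightarrow> bool list \<Rightarrow> bool" where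
  "detects Q w \<longleftrightarrow> (\<exists>j. matches_at Q w j)"

definition solves :: "nat set set \<Rightarrow> nat \<Rightarrow> nat \<Rightarrow> bool" where
  "solves F m k \<longleftrightarrow> (\<forall>w. similarity m k w \<longrightarrow> (\<exists>Q\<in>F. detects Q w))"

definition reg_exp :: "nat \<Rightarrow> nat set \<Rightarrow> nat set" where
  "reg_exp i Q = (\<lambda>p. i * p) ` Q"

definition reg_exp_family :: "nat \<Rightarrow> nat set set \<Rightarrow> nat set set" where
  "reg_exp_family i F = reg_exp i ` F"

end

theory Submission
  imports Defs
begin

lemma max_reg:
  assumes "finite Q" "Q \<noteq> {}"
  shows "Max (reg_exp i Q) = i * Max Q"
  unfolding reg_exp_def
  by (rule mono_Max_commute[symmetric]) (auto simp: mono_def assms)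

lemma G:
  assumes "is_seed Q" "i \<ge> 1" "length w = i * m" "matches_at (reg_exp i Q) w j"
  shows "j div i + Max Q < m \<and> (\<forall>p\<in>Q. w ! (j mod i + i * (j div i + p)))"
proof -
  have fin: "finite Q" "Q \<noteq> {}" using assms(1) by (auto simp: is_seed_def)
  have j: "j = j mod i + i * (j div i)" by simp
  have "j + i * Max Q < i * m" using assms(3,4) max_reg[OF fin] by (simp add: matches_at_def)
  moreover have "i * (j div i) \<le> j" by simp
  moreover have "i * (j div i + Max Q) = i*(j div i) + i*Max Q" by (simp add: algebra_simps)
  ultimately have "i * (j div i + Max Q) < i * m" by linarith
  hence 1: "j div i + Max Q < m" by simp
  have "\<forall>p\<in>Q. w ! (j + i * p)" using assms(4) by (auto simp: matches_at_def reg_exp_def)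
  moreover have "\<And>p. j + i * p = j mod i + i * (j div i + p)"
  proof -
    fix p
    have "j mod i + i * (j div i + p) = (j mod i + i * (j div i)) + i * p" by (simp add: algebra_simps)
    also have "j mod i + i * (j div i) = j" by simp
    finally show "j + i * p = j mod i + i * (j div i + p)" by simp
  qed
  ultimately have "\<forall>p\<in>Q. w ! (j mod i + i * (j div i + p))" by metis
  thus ?thesis using 1 by blast
qed

definition sig :: "nat \<Rightarrow> nat \<Rightarrow> nat \<Rightarrow> nat" where
  "sig i m x = (x mod i) * m + x div i"

lemma sig_props:
  assumes "i \<ge> 1" "m \<ge> 1"
  shows "bij_betw (sig i m) {..<i*m} {..<i*m}"
proof -
  have inj: "inj_on (sig i m) {..<i*m}"
  proof (rule inj_onI)
    fix x y assume x: "x \<in> {..<i*m}" and y: "y \<in> {..<i*m}" and e: "sig i m x = sig i m y"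
    have dx: "x div i < m" using x using less_mult_imp_div_less[of x m i] by (simp add: mult.commute)
    have dy: "y div i < m" using y using less_mult_imp_div_less[of y m i] by (simp add: mult.commute)
    have a1: "sig i m x div m = x mod i" "sig i m x mod m = x div i"
      using dx by (auto simp: sig_def)
    have a2: "sig i m y div m = y mod i" "sig i m y mod m = y div i"
      using dy by (auto simp: sig_def)
    have "x mod i = y mod i" using a1(1) a2(1) e by simp
    moreover have "x div i = y div i" using a1(2) a2(2) e by simp
    moreover have "x = x div i * i + x mod i" "y = y div i * i + y mod i" by simp_all
    ultimately show "x = y" by simp
  qed
  have sub: "sig i m ` {..<i*m} \<subseteq> {..<i*m}"
  proof
    fix y assume "y \<in> sig i m ` {..<i*m}"
    then obtain x where x: "x < i*m" and y: "y = sig i m x" by auto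
    have dx: "x div i < m" using x using less_mult_imp_div_less[of x m i] by (simp add: mult.commute)
    have "x mod i \<le> i - 1" using assms(1) using mod_less_divisor[of i x] by linarith
    hence h: "(x mod i) * m \<le> (i - 1) * m" by (rule mult_le_mono1)
    have "y < (i - 1) * m + m" using h dx unfolding y sig_def by linarith
    also have "\<dots> = i * m" using assms(1) by (simp add: algebra_simps diff_mult_distrib)
    finally show "y \<in> {..<i*m}" by simp
  qed
  have "sig i m ` {..<i*m} = {..<i*m}"
    using inj sub by (simp add: card_image card_subset_eq)
  thus ?thesis using inj by (simp add: bij_betw_def)
qed

lemma zeros_card: "length (filter Not w) = card {x. x < length w \<and> \<not> w ! x}"
  by (simp add: length_filter_conv_card)

lemma part1:
  assumes F: "\<forall>Q\<in>F. is_seed Q" and i: "i \<ge> 1" and m: "m \<ge> 1"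
    and S: "solves (reg_exp_family i F) (i * m) k"
  shows "solves F (i * m) k"
  unfolding solves_def
proof (intro allI impI)
  fix w assume sw: "similarity (i*m) k w"
  define w' where "w' = map (\<lambda>x. w ! sig i m x) [0..<i*m]"
  have lw: "length w = i*m" using sw by (simp add: similarity_def)
  have bij: "bij_betw (sig i m) {..<i*m} {..<i*m}" using sig_props i m .
  have "length (filter Not w') = card {x. x < length w' \<and> \<not> w' ! x}" by (rule zeros_card)
  also have "\<dots> = card {x. x < i*m \<and> \<not> w ! sig i m x}"
  proof -
    have nw: "w' ! x = w ! sig i m x" if "x < i*m" for x
      unfolding w'_def using that by (simp only: nth_map length_upt nth_upt) simp
    have lw'0: "length w' = i*m" unfolding w'_def by simp
    have "{x. x < length w' \<and> \<not> w' ! x} = {x. x < i*m \<and> \<not> w ! sig i m x}"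
      by (simp add: nw lw'0 cong: conj_cong)
    thus ?thesis by simp
  qed
  also have "\<dots> = card (sig i m ` {x. x < i*m \<and> \<not> w ! sig i m x})"
  proof -
    have "inj_on (sig i m) {x. x < i*m \<and> \<not> w ! sig i m x}"
      using bij unfolding bij_betw_def by (rule conjE) (erule inj_on_subset, auto)
    thus ?thesis by (rule card_image[symmetric])
  qed
  also have "sig i m ` {x. x < i*m \<and> \<not> w ! sig i m x} = {y. y < i*m \<and> \<not> w ! y}"
  proof
    show "sig i m ` {x. x < i*m \<and> \<not> w ! sig i m x} \<subseteq> {y. y < i*m \<and> \<not> w ! y}"
      using bij by (auto simp: bij_betw_def)
    show "{y. y < i*m \<and> \<not> w ! y} \<subseteq> sig i m ` {x. x < i*m \<and> \<not> w ! sig i m x}"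
    proof
      fix y assume y: "y \<in> {y. y < i*m \<and> \<not> w ! y}"
      then obtain x where "x < i*m" "y = sig i m x" using bij
        by (metis (no_types, lifting) bij_betw_def imageE lessThan_iff mem_Collect_eq)
      thus "y \<in> sig i m ` {x. x < i*m \<and> \<not> w ! sig i m x}" using y by auto
    qed
  qed
  also have "card {y. y < i*m \<and> \<not> w ! y} = k" using sw lw by (simp add: similarity_def zeros_card)
  finally have "similarity (i*m) k w'" by (simp add: similarity_def w'_def)
  then obtain Q' where Q': "Q' \<in> reg_exp_family i F" "detects Q' w'" using S by (auto simp: solves_def)
  then obtain Q j where Q: "Q \<in> F" "matches_at (reg_exp i Q) w' j"
    by (auto simp: reg_exp_family_def detects_def)
  have sQ: "is_seed Q" using F Q by auto
  have lw': "length w' = i * m" by (simp add: w'_def)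
  from G[OF sQ i lw' Q(2)] have
    g1: "j div i + Max Q < m" and g2: "\<forall>p\<in>Q. w' ! (j mod i + i * (j div i + p))" by auto
  have jm: "j mod i < i" using i by simp
  have "matches_at Q w ((j mod i) * m + j div i)"
    unfolding matches_at_def
  proof
    have "(j mod i) * m + j div i + Max Q < (j mod i) * m + m" using g1 by simp
    also have "\<dots> \<le> (i - 1) * m + m"
    proof -
      have "j mod i \<le> i - 1" using jm by linarith
      hence "(j mod i) * m \<le> (i - 1) * m" by (rule mult_le_mono1)
      thus ?thesis by (rule add_right_mono)
    qed
    also have "\<dots> = i * m" using i by (simp add: algebra_simps diff_mult_distrib)
    finally show "(j mod i) * m + j div i + Max Q < length w" using lw by simp
    show "\<forall>p\<in>Q. w ! ((j mod i) * m + j div i + p)"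
    proof
      fix p assume p: "p \<in> Q"
      have fin: "finite Q" using sQ by (simp add: is_seed_def)
      have "p \<le> Max Q" using fin p by simp
      hence pm: "j div i + p < m" using g1 by simp
      have x: "j mod i + i * (j div i + p) < i * m"
      proof -
        have "j mod i + i * (j div i + p) < i + i * (j div i + p)" using jm by simp
        also have "\<dots> = i * (j div i + p + 1)" by (simp add: algebra_simps)
        also have "\<dots> \<le> i * m" using pm by (intro mult_le_mono2) simp
        finally show ?thesis .
      qed
      have sg: "sig i m (j mod i + i * (j div i + p)) = (j mod i) * m + j div i + p"
        using jm by (simp add: sig_def)
      have "w' ! (j mod i + i * (j div i + p))" using g2 p by blast
      hence "w ! sig i m (j mod i + i * (j div i + p))" using x by (simp add: w'_def)
      thus "w ! ((j mod i) * m + j div i + p)" unfolding sg .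
    qed
  qed
  thus "\<exists>Q\<in>F. detects Q w" using Q(1) by (auto simp: detects_def)
qed

lemma part2:
  assumes F: "\<forall>Q\<in>F. is_seed Q" and i: "i \<ge> 1" and m: "m \<ge> 1" and k: "k \<le> i * m"
    and S: "solves (reg_exp_family i F) (i * m) k"
  shows "solves F m (k div i)"
  unfolding solves_def
proof (intro allI impI)
  fix v assume sv: "similarity m (k div i) v"
  define s where "s = k mod i"
  define k' where "k' = k div i"
  have kk: "k = i * k' + s" unfolding s_def k'_def by simp
  have lv: "length v = m" using sv by (simp add: similarity_def)
  define Z where "Z = {t. t < m \<and> \<not> v ! t}"
  have cZ: "card Z = k'" using sv lv by (simp add: similarity_def zeros_card Z_def k'_def)
  obtain t1 where t1: "s > 0 \<longrightarrow> t1 < m \<and> v ! t1"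
  proof (cases "s > 0")
    case True
    hence "i * k' < i * m" using kk k by linarith
    hence "k' < m" by simp
    hence "Z \<noteq> {t. t < m}" using cZ by auto
    then obtain t where "t < m" "v ! t" unfolding Z_def by auto
    thus ?thesis using that by blast
  next
    case False thus ?thesis using that by blast
  qed
  define g where "g x = (v ! (x div i) \<and> \<not> (x div i = t1 \<and> x mod i < s))" for x
  define w' where "w' = map g [0..<i*m]"
  define h where "h = (\<lambda>(t::nat, r::nat). t * i + r)"
  have hdiv: "h (t, r) div i = t" "h (t, r) mod i = r" if "r < i" for t r
    using that by (auto simp: h_def)
  have hlt: "h (t, r) < i * m" if "r < i" "t < m" for t r
  proof -
    have "h (t, r) < t * i + i" using that by (simp add: h_def)
    also have "\<dots> = (t + 1) * i" by simp
    also have "\<dots> \<le> m * i" using that by (intro mult_le_mono1) simp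
    finally show ?thesis by (simp add: mult.commute)
  qed
  define A where "A = Z \<times> {..<i} \<union> {t1} \<times> {..<s}"
  have si: "s < i" unfolding s_def using i by simp
  have Asub: "A \<subseteq> {..<m} \<times> {..<i}" using t1 si by (auto simp: A_def Z_def)
  have injh: "inj_on h A"
  proof (rule inj_onI)
    fix a b assume a: "a \<in> A" and b: "b \<in> A" and e: "h a = h b"
    obtain t r where ar0: "a = (t, r)" by (cases a)
    obtain t' r' where br0: "b = (t', r')" by (cases b)
    have ri: "r < i" "r' < i" using a b Asub ar0 br0 by blast+
    have "h (t,r) = h (t',r')" using e ar0 br0 by simp
    hence "h (t,r) div i = h (t',r') div i" "h (t,r) mod i = h (t',r') mod i" by simp_all
    hence "t = t'" "r = r'" using hdiv[OF ri(1)] hdiv[OF ri(2)] by simp_all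
    thus "a = b" using ar0 br0 by simp
  qed
  have disj: "Z \<times> {..<i} \<inter> {t1} \<times> {..<s} = {}"
    using t1 by (auto simp: Z_def)
  have cA: "card A = k"
    unfolding A_def using disj cZ kk
    by (simp add: card_Un_disjoint card_cartesian_product Z_def mult.commute)
  have eq: "{x. x < length w' \<and> \<not> w' ! x} = h ` A"
  proof
    show "{x. x < length w' \<and> \<not> w' ! x} \<subseteq> h ` A"
    proof
      fix x assume x: "x \<in> {x. x < length w' \<and> \<not> w' ! x}"
      hence xl: "x < i * m" and ng: "\<not> g x" by (auto simp: w'_def)
      have xd: "x div i < m" using xl less_mult_imp_div_less[of x m i] by (simp add: mult.commute)
      have xr: "x mod i < i" using i by simp
      have hx: "x = h (x div i, x mod i)" by (simp add: h_def)
      have "(x div i, x mod i) \<in> A" using ng xd xr by (auto simp: A_def Z_def g_def)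
      thus "x \<in> h ` A" using hx by blast
    qed
    show "h ` A \<subseteq> {x. x < length w' \<and> \<not> w' ! x}"
    proof
      fix x assume "x \<in> h ` A"
      then obtain t r where tr: "(t, r) \<in> A" "x = h (t, r)" by auto
      have r: "r < i" and t: "t < m" using tr Asub by auto
      have xl: "x < i * m" using hlt[OF r t] tr by simp
      have "\<not> g x" using tr(1) hdiv[OF r] tr(2) by (auto simp: g_def A_def Z_def)
      thus "x \<in> {x. x < length w' \<and> \<not> w' ! x}" using xl by (simp add: w'_def)
    qed
  qed
  have "length (filter Not w') = k"
    using zeros_card[of w'] eq card_image[OF injh] cA by simp
  hence "similarity (i*m) k w'" by (simp add: similarity_def w'_def)
  then obtain Q' where Q': "Q' \<in> reg_exp_family i F" "detects Q' w'" using S by (auto simp: solves_def)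
  then obtain Q j where Q: "Q \<in> F" "matches_at (reg_exp i Q) w' j"
    by (auto simp: reg_exp_family_def detects_def)
  have sQ: "is_seed Q" using F Q by auto
  have lw': "length w' = i * m" by (simp add: w'_def)
  from G[OF sQ i lw' Q(2)] have
    g1: "j div i + Max Q < m" and g2: "\<forall>p\<in>Q. w' ! (j mod i + i * (j div i + p))" by auto
  have jm: "j mod i < i" using i by simp
  have "matches_at Q v (j div i)"
    unfolding matches_at_def
  proof
    show "j div i + Max Q < length v" using g1 lv by simp
    show "\<forall>p\<in>Q. v ! (j div i + p)"
    proof
      fix p assume p: "p \<in> Q"
      have fin: "finite Q" using sQ by (simp add: is_seed_def)
      have "p \<le> Max Q" using fin p by simp
      hence pm: "j div i + p < m" using g1 by simp
      have e: "j mod i + i * (j div i + p) = h (j div i + p, j mod i)" by (simp add: h_def)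
      have x: "j mod i + i * (j div i + p) < i * m" using hlt[OF jm pm] e by simp
      have "w' ! (j mod i + i * (j div i + p))" using g2 p by blast
      hence "g (j mod i + i * (j div i + p))" using x by (simp add: w'_def)
      hence "v ! ((j mod i + i * (j div i + p)) div i)" unfolding g_def by blast
      moreover have "(j mod i + i * (j div i + p)) div i = j div i + p" using hdiv(1)[OF jm] e by metis
      ultimately show "v ! (j div i + p)" by simp
    qed
  qed
  thus "\<exists>Q\<in>F. detects Q v" using Q(1) by (auto simp: detects_def)
qed

theorem mainTheorem5:
  fixes F :: "nat set set" and i m k :: nat
  assumes "finite F" and "\<forall>Q\<in>F. is_seed Q"
    and "i \<ge> 1" and "m \<ge> 1" and "k \<le> i * m"
    and "solves (reg_exp_family i F) (i * m) k"
  shows "solves F (i * m) k \<and> solves F m (k div i)"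
  using part1[OF assms(2,3,4,6)] part2[OF assms(2,3,4,5,6)] by simp

end
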